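(* Let $k\in\mathbb{Z}_{\geq2}$ and $j\in\mathbb{Z}_{\geq0}$. Then, as $n\to\infty$ (with implied constants depending on $k$ and $j$), \[ {}_k\omega_n(j)=\frac{e^{-1/n}}{j!\,n^j}+O\!\left(\frac{2^{r_k(n)-j}}{(r_k(n)-j)!}\right), \] and in particular \[ {}_k\omega_n(j)=\frac{1}{j!\,n^j}\left(1-\frac1n\right)+O\!\left(\frac{1}{n^{j+2}}\right). \]
   Context: For $k\in\mathbb{Z}_{\ge2}$, $n\in\mathbb{Z}_{\ge1}$, $r_k(n)=\frac1n\sum_{d\mid n}k^d\mu(n/d)$ ($\mu$ the Möbius function); $n\,r_k(n)$ is the degree of the $n$th dynatomic polynomial of $x^k+c$. $C_n\wr S_r=C_n^r\rtimes S_r$ acts on $B(n,r)=C_n\times\{1,\dots,r\}$ by $((\zeta_1,\dots,\zeta_r),\pi)\cdot(\zeta,i)=(\zeta_i\zeta,\pi(i))$; $\mathrm{Fix}(\sigma)$ is the fixed-point set of $\sigma$ in $B(n,r)$, and $\omega_{n,r}(j)=|\{\sigma\in C_n\wr S_r: |\mathrm{Fix}(\sigma)|=jn\}|/(r!\,n^r)$. Finally ${}_k\omega_n:=\omega_{n,r_k(n)}$. *)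

theory Defs
  imports "HOL-Analysis.Analysis" "HOL-Computational_Algebra.Squarefree" "HOL-Library.Landau_Symbols"
begin

definition moebius :: "nat \<Rightarrow> int" where
  "moebius m = (if squarefree m then (-1) ^ card (prime_factors m) else 0)"

text \<open>r_k(n) = (1/n) * sum over d dividing n of k^d * mu(n/d); this sum is always
  divisible by n (n > 0) and nonnegative, so r_k(n) is a natural number.\<close>
definition rk :: "nat \<Rightarrow> nat \<Rightarrow> nat" where
  "rk k n = nat ((\<Sum>d | d dvd n. int k ^ d * moebius (n div d)) div int n)"

text \<open>Wreath product C_n wr S_r, with C_n modelled as the additive group {0..<n}
  (integers mod n) and {1..r} modelled as {0..<r}.\<close>
definition wreath :: "nat \<Rightarrow> nat \<Rightarrow> ((nat \<Rightarrow> nat) \<times> (nat \<Rightarrow> nat)) set" where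
  "wreath n r = {(z, \<pi>). z \<in> {0..<r} \<rightarrow>\<^sub>E {0..<n} \<and> \<pi> permutes {0..<r}}"

definition Bset :: "nat \<Rightarrow> nat \<Rightarrow> (nat \<times> nat) set" where
  "Bset n r = {0..<n} \<times> {0..<r}"

definition wr_act :: "nat \<Rightarrow> ((nat \<Rightarrow> nat) \<times> (nat \<Rightarrow> nat)) \<Rightarrow> nat \<times> nat \<Rightarrow> nat \<times> nat" where
  "wr_act n \<sigma> x = ((fst \<sigma> (snd x) + fst x) mod n, snd \<sigma> (snd x))"

definition Fix :: "nat \<Rightarrow> nat \<Rightarrow> ((nat \<Rightarrow> nat) \<times> (nat \<Rightarrow> nat)) \<Rightarrow> (nat \<times> nat) set" where
  "Fix n r \<sigma> = {x \<in> Bset n r. wr_act n \<sigma> x = x}"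

definition omega :: "nat \<Rightarrow> nat \<Rightarrow> nat \<Rightarrow> real" where
  "omega n r j = real (card {\<sigma> \<in> wreath n r. card (Fix n r \<sigma>) = j * n})
                 / (fact r * real n ^ r)"

definition komega :: "nat \<Rightarrow> nat \<Rightarrow> nat \<Rightarrow> real" where
  "komega k n j = omega n (rk k n) j"

end

theory Submission
  imports Defs "HOL-Combinatorics.Permutations"
begin


definition W :: "nat \<Rightarrow> nat set \<Rightarrow> ((nat\<Rightarrow>nat)\<times>(nat\<Rightarrow>nat)) set" where
  "W n I = {(z,\<pi>). z \<in> I \<rightarrow>\<^sub>E {0..<n} \<and> \<pi> permutes I}"

definition Mk :: "nat set \<Rightarrow> ((nat\<Rightarrow>nat)\<times>(nat\<Rightarrow>nat)) \<Rightarrow> nat set" where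
  "Mk I \<sigma> = {i\<in>I. snd \<sigma> i = i \<and> fst \<sigma> i = 0}"

definition Dc :: "nat \<Rightarrow> nat set \<Rightarrow> nat" where
  "Dc n U = card {\<sigma> \<in> W n U. Mk U \<sigma> = {}}"

lemma ext_bij:
  assumes "n > 0" "S \<subseteq> I"
  shows "bij_betw (\<lambda>\<sigma>. (\<lambda>i. if i\<in>S then 0 else fst \<sigma> i, snd \<sigma>))
     {\<sigma>\<in>W n (I-S). Mk (I-S) \<sigma> = {}} {\<sigma>\<in>W n I. Mk I \<sigma> = S}"
proof (rule bij_betwI[where g = "\<lambda>\<sigma>. (restrict (fst \<sigma>) (I-S), snd \<sigma>)"])
  show "(\<lambda>\<sigma>. (\<lambda>i. if i\<in>S then 0 else fst \<sigma> i, snd \<sigma>)) \<in> {\<sigma>\<in>W n (I-S). Mk (I-S) \<sigma> = {}} \<rightarrow> {\<sigma>\<in>W n I. Mk I \<sigma> = S}"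
  proof
    fix \<sigma> assume a: "\<sigma> \<in> {\<sigma>\<in>W n (I-S). Mk (I-S) \<sigma> = {}}"
    obtain z p where s: "\<sigma> = (z,p)" by force
    have z: "z \<in> (I-S) \<rightarrow>\<^sub>E {0..<n}" and p: "p permutes (I-S)" and m: "Mk (I-S) (z,p) = {}"
      using a s by (auto simp: W_def)
    have pI: "p permutes I" using p permutes_subset by blast
    have zI: "(\<lambda>i. if i\<in>S then 0 else z i) \<in> I \<rightarrow>\<^sub>E {0..<n}"
      using z assms by (auto simp: PiE_def Pi_def extensional_def)
    have mk: "Mk I ((\<lambda>i. if i\<in>S then 0 else z i), p) = S"
    proof -
      have "\<And>i. i \<in> S \<Longrightarrow> p i = i" using p by (simp add: permutes_not_in)
      then show ?thesis using m assms(2) by (auto simp: Mk_def)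
    qed
    then show "(\<lambda>i. if i\<in>S then 0 else fst \<sigma> i, snd \<sigma>) \<in> {\<sigma>\<in>W n I. Mk I \<sigma> = S}"
      unfolding s fst_conv snd_conv using pI zI mk by (simp add: W_def)
  qed
next
  show "(\<lambda>\<sigma>. (restrict (fst \<sigma>) (I-S), snd \<sigma>)) \<in> {\<sigma>\<in>W n I. Mk I \<sigma> = S} \<rightarrow> {\<sigma>\<in>W n (I-S). Mk (I-S) \<sigma> = {}}"
  proof
    fix \<sigma> assume a: "\<sigma> \<in> {\<sigma>\<in>W n I. Mk I \<sigma> = S}"
    obtain z p where s: "\<sigma> = (z,p)" by force
    have z: "z \<in> I \<rightarrow>\<^sub>E {0..<n}" and p: "p permutes I" and m: "Mk I (z,p) = S"
      using a s by (auto simp: W_def)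
    have fixS: "\<And>i. i \<in> S \<Longrightarrow> p i = i" using m by (auto simp: Mk_def)
    have p': "p permutes (I-S)"
      using p fixS unfolding permutes_def by blast
    have z': "restrict z (I-S) \<in> (I-S) \<rightarrow>\<^sub>E {0..<n}" using z by auto
    have "Mk (I-S) (restrict z (I-S), p) = {}" using m by (auto simp: Mk_def)
    then show "(restrict (fst \<sigma>) (I-S), snd \<sigma>) \<in> {\<sigma>\<in>W n (I-S). Mk (I-S) \<sigma> = {}}"
      using s p' z' by (auto simp: W_def)
  qed
next
  fix \<sigma> assume a: "\<sigma> \<in> {\<sigma>\<in>W n (I-S). Mk (I-S) \<sigma> = {}}"
  obtain z p where s: "\<sigma> = (z,p)" by force
  have z: "z \<in> (I-S) \<rightarrow>\<^sub>E {0..<n}" using a s by (auto simp: W_def)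
  show "(restrict (fst (\<lambda>i. if i\<in>S then 0 else fst \<sigma> i, snd \<sigma>)) (I-S), snd (\<lambda>i. if i\<in>S then 0 else fst \<sigma> i, snd \<sigma>)) = \<sigma>"
    using s z by (auto simp: PiE_def extensional_def restrict_def fun_eq_iff)
next
  fix \<sigma> assume a: "\<sigma> \<in> {\<sigma>\<in>W n I. Mk I \<sigma> = S}"
  obtain z p where s: "\<sigma> = (z,p)" by force
  have z: "z \<in> I \<rightarrow>\<^sub>E {0..<n}" and m: "Mk I (z,p) = S"
    using a s by (auto simp: W_def)
  have "\<And>i. i \<in> S \<Longrightarrow> z i = 0" using m by (auto simp: Mk_def)
  then show "(\<lambda>i. if i\<in>S then 0 else fst (restrict (fst \<sigma>) (I-S), snd \<sigma>) i, snd (restrict (fst \<sigma>) (I-S), snd \<sigma>)) = \<sigma>"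
    using s z by (auto simp: PiE_def extensional_def restrict_def fun_eq_iff)
qed


lemma W_eq: "W n I = (I \<rightarrow>\<^sub>E {0..<n}) \<times> {p. p permutes I}"
  by (auto simp: W_def)

lemma finite_W: "finite I \<Longrightarrow> finite (W n I)"
  by (simp add: W_eq finite_PiE finite_permutations)

lemma card_W: "finite I \<Longrightarrow> card (W n I) = fact (card I) * n ^ card I"
  by (simp add: W_eq card_cartesian_product card_PiE card_permutations)

lemma card_Mk_eq:
  assumes "n > 0" "finite I" "S \<subseteq> I"
  shows "card {\<sigma>\<in>W n I. Mk I \<sigma> = S} = Dc n (I - S)"
  unfolding Dc_def using bij_betw_same_card[OF ext_bij[OF assms(1,3)]] by simp

lemma Mk_sub: "Mk I \<sigma> \<subseteq> I" by (auto simp: Mk_def)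

lemma W_decomp:
  assumes "n > 0" "finite U"
  shows "card (W n U) = (\<Sum>T\<in>Pow U. Dc n T)"
proof -
  have "card (W n U) = (\<Sum>\<sigma>\<in>W n U. 1)" by simp
  also have "\<dots> = (\<Sum>S\<in>Pow U. \<Sum>\<sigma>\<in>{x\<in>W n U. Mk U x = S}. 1)"
    by (rule sum.group[symmetric]) (auto simp: finite_W assms Mk_def)
  also have "\<dots> = (\<Sum>S\<in>Pow U. Dc n (U - S))"
    by (rule sum.cong) (auto simp: card_Mk_eq assms)
  also have "\<dots> = (\<Sum>T\<in>Pow U. Dc n T)"
  proof (rule sum.reindex_bij_betw)
    show "bij_betw (\<lambda>S. U - S) (Pow U) (Pow U)"
      by (rule bij_betwI[where g="\<lambda>S. U - S"]) auto
  qed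
  finally show ?thesis .
qed

definition dform :: "nat \<Rightarrow> nat \<Rightarrow> real" where
  "dform n m = (\<Sum>t\<le>m. real (m choose t) * (-1) ^ (m - t) * (fact t * real n ^ t))"

lemma sum_Pow_card:
  fixes h :: "nat \<Rightarrow> real"
  assumes "finite S"
  shows "(\<Sum>T\<in>Pow S. h (card T)) = (\<Sum>t\<le>card S. real (card S choose t) * h t)"
proof -
  have "(\<Sum>T\<in>Pow S. h (card T)) = (\<Sum>t\<le>card S. \<Sum>T\<in>{x\<in>Pow S. card x = t}. h (card T))"
    by (rule sum.group[symmetric]) (auto simp: assms card_mono)
  also have "\<dots> = (\<Sum>t\<le>card S. real (card S choose t) * h t)"
  proof (rule sum.cong[OF refl])
    fix t
    have "{x\<in>Pow S. card x = t} = {B. B \<subseteq> S \<and> card B = t}" by auto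
    then show "(\<Sum>T\<in>{x\<in>Pow S. card x = t}. h (card T)) = real (card S choose t) * h t"
      using n_subsets[OF assms, of t] by simp
  qed
  finally show ?thesis .
qed

lemma Dc_formula:
  assumes "n > 0" "finite S"
  shows "real (Dc n S) = dform n (card S)"
proof -
  have "real (Dc n S) = (\<Sum>T\<in>Pow S. (-1) ^ (card S - card T) * real (card (W n T)))"
    by (rule inclusion_exclusion_mobius[where f="\<lambda>S. real (Dc n S)"])
       (auto simp: W_decomp[OF assms(1)] assms(2))
  also have "\<dots> = (\<Sum>T\<in>Pow S. (-1) ^ (card S - card T) * (fact (card T) * real n ^ card T))"
    by (rule sum.cong[OF refl]) (metis PowD card_W assms(2) finite_subset of_nat_fact of_nat_mult of_nat_power)
  also have "\<dots> = dform n (card S)"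
    unfolding dform_def by (subst sum_Pow_card[OF assms(2)]) (simp add: mult_ac)
  finally show ?thesis .
qed

lemma count_formula:
  assumes "n > 0" "finite I"
  shows "real (card {\<sigma>\<in>W n I. card (Mk I \<sigma>) = j}) = real (card I choose j) * dform n (card I - j)"
proof -
  have "card {\<sigma>\<in>W n I. card (Mk I \<sigma>) = j} = (\<Sum>\<sigma>\<in>{\<sigma>\<in>W n I. card (Mk I \<sigma>) = j}. 1)" by simp
  also have "\<dots> = (\<Sum>S\<in>{B. B \<subseteq> I \<and> card B = j}. \<Sum>\<sigma>\<in>{x\<in>{\<sigma>\<in>W n I. card (Mk I \<sigma>) = j}. Mk I x = S}. 1)"
    by (rule sum.group[symmetric]) (auto simp: finite_W assms Mk_def)
  also have "\<dots> = (\<Sum>S\<in>{B. B \<subseteq> I \<and> card B = j}. Dc n (I - S))"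
  proof (rule sum.cong[OF refl])
    fix S assume S: "S \<in> {B. B \<subseteq> I \<and> card B = j}"
    then have "{x\<in>{\<sigma>\<in>W n I. card (Mk I \<sigma>) = j}. Mk I x = S} = {\<sigma>\<in>W n I. Mk I \<sigma> = S}" by auto
    then show "(\<Sum>\<sigma>\<in>{x\<in>{\<sigma>\<in>W n I. card (Mk I \<sigma>) = j}. Mk I x = S}. 1) = Dc n (I - S)"
      using S card_Mk_eq[OF assms, of S] by simp
  qed
  finally have "real (card {\<sigma>\<in>W n I. card (Mk I \<sigma>) = j}) = (\<Sum>S\<in>{B. B \<subseteq> I \<and> card B = j}. real (Dc n (I - S)))"
    by simp
  also have "\<dots> = (\<Sum>S\<in>{B. B \<subseteq> I \<and> card B = j}. dform n (card I - j))"
    by (rule sum.cong[OF refl]) (auto simp: Dc_formula assms card_Diff_subset finite_subset)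
  also have "\<dots> = real (card I choose j) * dform n (card I - j)"
    using n_subsets[OF assms(2), of j] by simp
  finally show ?thesis .
qed

lemma dform_eq:
  assumes "n > 0"
  shows "dform n m = fact m * real n ^ m * (\<Sum>i\<le>m. (-1 / real n) ^ i / fact i)"
proof -
  have "dform n m = (\<Sum>t\<le>m. fact m * real n ^ m * ((-1 / real n) ^ (m - t) / fact (m - t)))"
    unfolding dform_def
  proof (rule sum.cong[OF refl])
    fix t assume "t \<in> {..m}"
    then have tm: "t \<le> m" by simp
    have nm: "real n ^ m = real n ^ t * real n ^ (m - t)"
      using tm by (simp flip: power_add)
    show "real (m choose t) * (-1) ^ (m - t) * (fact t * real n ^ t) =
          fact m * real n ^ m * ((-1 / real n) ^ (m - t) / fact (m - t))"
    proof -
      have h: "real n ^ (m-t) * (- (1 / real n)) ^ (m-t) = (-1)^(m-t)"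
        using assms by (simp flip: power_mult_distrib)
      show ?thesis
      using assms h unfolding binomial_fact[OF tm] nm
      by (simp add: power_divide field_simps)
    qed
  qed
  also have "\<dots> = fact m * real n ^ m * (\<Sum>t\<le>m. (-1 / real n) ^ (m - t) / fact (m - t))"
    by (simp add: sum_distrib_left)
  also have "(\<Sum>t\<le>m. (-1 / real n) ^ (m - t) / fact (m - t)) = (\<Sum>i\<le>m. (-1 / real n) ^ i / fact i)"
    using sum.nat_diff_reindex[of "\<lambda>i. (-1 / real n) ^ i / fact i" "Suc m"]
    by (simp add: lessThan_Suc_atMost)
  finally show ?thesis .
qed


lemma mod_fix:
  fixes a b n :: nat
  assumes "a < n" "b < n"
  shows "((a + b) mod n = b) \<longleftrightarrow> a = 0"
proof
  assume h: "(a + b) mod n = b"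
  show "a = 0"
  proof (cases "a + b < n")
    case True then show ?thesis using h by simp
  next
    case False
    then have "(a + b) mod n = (a + b - n) mod n" by (simp add: le_mod_geq)
    also have "\<dots> = a + b - n" using assms False by simp
    finally show ?thesis using h assms by simp
  qed
qed (use assms in simp)

lemma wreath_eq: "wreath n r = W n {0..<r}"
  by (auto simp: wreath_def W_def)

lemma Fix_eq:
  assumes "\<sigma> \<in> wreath n r"
  shows "Fix n r \<sigma> = {0..<n} \<times> Mk {0..<r} \<sigma>"
proof -
  obtain z p where s: "\<sigma> = (z,p)" by force
  have z: "\<And>i. i < r \<Longrightarrow> z i < n" using assms s by (auto simp: wreath_def PiE_def Pi_def)
  show ?thesis
  proof (intro set_eqI iffI)
    fix x assume "x \<in> Fix n r \<sigma>"
    then show "x \<in> {0..<n} \<times> Mk {0..<r} \<sigma>"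
      using s z mod_fix[of "z (snd x)" n "fst x"]
      by (auto simp: Fix_def Bset_def wr_act_def Mk_def)
  next
    fix x assume "x \<in> {0..<n} \<times> Mk {0..<r} \<sigma>"
    then show "x \<in> Fix n r \<sigma>"
      using s by (auto simp: Fix_def Bset_def wr_act_def Mk_def)
  qed
qed

lemma omega_formula:
  assumes "n > 0"
  shows "omega n r j = (if j \<le> r then (\<Sum>i\<le>r-j. (-1 / real n) ^ i / fact i) / (fact j * real n ^ j) else 0)"
proof -
  have seteq: "{\<sigma> \<in> wreath n r. card (Fix n r \<sigma>) = j * n} = {\<sigma>\<in>W n {0..<r}. card (Mk {0..<r} \<sigma>) = j}"
  proof -
    have "\<And>\<sigma>. \<sigma> \<in> wreath n r \<Longrightarrow> card (Fix n r \<sigma>) = n * card (Mk {0..<r} \<sigma>)"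
      by (simp add: Fix_eq card_cartesian_product)
    then show ?thesis using assms by (auto simp: wreath_eq)
  qed
  have c: "real (card {\<sigma> \<in> wreath n r. card (Fix n r \<sigma>) = j * n}) = real (r choose j) * dform n (r - j)"
    unfolding seteq using count_formula[OF assms, of "{0..<r}" j] by simp
  show ?thesis
  proof (cases "j \<le> r")
    case False then show ?thesis using c by (simp add: omega_def)
  next
    case True
    have nr: "real n ^ r = real n ^ j * real n ^ (r - j)" using True by (simp flip: power_add)
    have fr: "(fact r :: real) = fact r" by simp
    show ?thesis using True assms
      unfolding omega_def c dform_eq[OF assms] binomial_fact[OF True] nr
      by (simp add: field_simps)
  qed
qed



lemma exp_tail:
  fixes x :: real
  assumes "0 \<le> x" "x \<le> 1/2"
  shows "\<bar>exp (-x) - (\<Sum>i\<le>m. (-x)^i / fact i)\<bar> \<le> 2 * x^(m+1) / fact (m+1)"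
proof -
  define f where "f = (\<lambda>i. (-x)^i / fact i :: real)"
  have fs: "f sums exp (-x)"
    using exp_converges[of "-x"] by (simp add: f_def divide_inverse mult.commute)
  have ts: "(\<lambda>i. f (i + Suc m)) sums (exp (-x) - (\<Sum>i<Suc m. f i))"
    using fs sums_iff_shift'[of f "Suc m" "exp (-x)"] by simp
  define c where "c = x^(m+1) / fact (m+1)"
  have gs: "(\<lambda>i. c * x^i) sums (c * (1 / (1 - x)))"
    by (rule sums_mult, rule geometric_sums) (use assms in simp)
  have bnd: "\<bar>f (i + Suc m)\<bar> \<le> c * x^i" for i
  proof -
    have "\<bar>f (i + Suc m)\<bar> = x^(i + Suc m) / fact (i + Suc m)"
      using assms by (simp add: f_def power_abs abs_mult)
    also have "\<dots> \<le> x^(i + Suc m) / fact (Suc m)"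
      by (rule divide_left_mono[OF fact_mono]) (use assms in auto)
    also have "\<dots> = c * x^i" by (simp add: c_def power_add field_simps)
    finally show ?thesis .
  qed
  have "exp (-x) - (\<Sum>i<Suc m. f i) \<le> c * (1 / (1 - x))"
    by (rule sums_le[OF _ ts gs]) (use bnd abs_le_iff in blast)
  moreover have "-(exp (-x) - (\<Sum>i<Suc m. f i)) \<le> c * (1 / (1 - x))"
    by (rule sums_le[OF _ sums_minus[OF ts] gs]) (use bnd abs_le_iff in blast)
  ultimately have "\<bar>exp (-x) - (\<Sum>i<Suc m. f i)\<bar> \<le> c * (1 / (1 - x))" by linarith
  also have "\<dots> \<le> c * 2"
  proof (rule mult_left_mono)
    show "1 / (1 - x) \<le> 2" using assms by (simp add: field_simps)
    show "0 \<le> c" using assms by (simp add: c_def)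
  qed
  finally show ?thesis by (simp add: f_def c_def lessThan_Suc_atMost mult_ac)
qed

lemma moebius_abs: "\<bar>Defs.moebius m\<bar> \<le> 1"
  by (simp add: Defs.moebius_def)

lemma moebius_1: "Defs.moebius (Suc 0) = 1"
  by (simp add: Defs.moebius_def)

lemma geom_lt:
  assumes "k \<ge> 2"
  shows "(\<Sum>d<N. (int k)^d) < int k ^ N"
proof (induction N)
  case 0 then show ?case by simp
next
  case (Suc N)
  have "(\<Sum>d<Suc N. (int k)^d) = (\<Sum>d<N. (int k)^d) + int k ^ N" by simp
  also have "\<dots> < 2 * int k ^ N" using Suc by simp
  also have "\<dots> \<le> int k * int k ^ N" using assms by (intro mult_right_mono) auto
  finally show ?case by simp
qed

lemma divisor_small:
  fixes d n :: nat
  assumes "n \<ge> 1" "d dvd n" "d \<noteq> n"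
  shows "d \<le> n div 2"
proof -
  obtain e where e: "n = d * e" using assms by (auto elim: dvdE)
  have "e \<noteq> 0" "e \<noteq> 1" using e assms by auto
  then have "e \<ge> 2" by simp
  then have "d * 2 \<le> n" using e by (metis mult_le_mono2)
  then show ?thesis by simp
qed

lemma sum_lower:
  assumes "k \<ge> 2" "n \<ge> 1"
  shows "int k ^ n - int k ^ (n div 2 + 1) \<le> (\<Sum>d | d dvd n. int k ^ d * moebius (n div d))"
proof -
  define D' where "D' = {d. d dvd n \<and> d \<noteq> n}"
  have fin: "finite D'" unfolding D'_def
    by (rule finite_subset[of _ "{d. d dvd n}"]) (use assms finite_divisors_nat in auto)
  have ins: "{d. d dvd n} = insert n D'" "n \<notin> D'" by (auto simp: D'_def)
  have sub: "D' \<subseteq> {..<n div 2 + 1}"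
  proof
    fix d assume "d \<in> D'"
    then have "d \<le> n div 2" using divisor_small[OF assms(2)] by (auto simp: D'_def)
    then show "d \<in> {..<n div 2 + 1}" by simp
  qed
  have "(\<Sum>d | d dvd n. int k ^ d * moebius (n div d)) = int k ^ n + (\<Sum>d\<in>D'. int k ^ d * moebius (n div d))"
    using ins fin assms by (simp add: moebius_1)
  moreover have "(\<Sum>d\<in>D'. int k ^ d * moebius (n div d)) \<ge> - (\<Sum>d\<in>D'. int k ^ d)"
  proof -
    have "\<And>d. int k ^ d * moebius (n div d) \<ge> - (int k ^ d)"
    proof -
      fix d
      have "\<bar>int k ^ d * moebius (n div d)\<bar> \<le> int k ^ d * 1"
        unfolding abs_mult by (simp add: mult_left_le moebius_abs)
      then show "int k ^ d * moebius (n div d) \<ge> - (int k ^ d)" by linarith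
    qed
    then show ?thesis by (simp add: sum_negf[symmetric] sum_mono)
  qed
  moreover have "(\<Sum>d\<in>D'. int k ^ d) \<le> (\<Sum>d<n div 2 + 1. int k ^ d)"
    by (rule sum_mono2) (use sub in auto)
  moreover have "(\<Sum>d<n div 2 + 1. int k ^ d) < int k ^ (n div 2 + 1)"
    using geom_lt assms by blast
  ultimately show ?thesis by linarith
qed

lemma sq_le_pow: "4 \<le> n \<Longrightarrow> n * n \<le> (2::nat) ^ n"
proof (induction n rule: nat_induct_at_least)
  case base then show ?case by simp
next
  case (Suc n)
  have "4 * n \<le> n * n" using Suc by (intro mult_right_mono) auto
  then have "Suc (n+n) \<le> n*n" using Suc by linarith
  then have "Suc n * Suc n \<le> 2 * (n * n)" by simp
  also have "\<dots> \<le> 2 * 2 ^ n" using Suc by simp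
  finally show ?case by simp
qed

lemma rk_large:
  assumes "k \<ge> 2" "n \<ge> 2 * j + 6"
  shows "j + 1 \<le> rk k n"
proof -
  have n4: "n \<ge> 4" "n \<ge> 1" using assms by auto
  obtain n' where nn: "n = Suc n'" using n4 by (cases n) auto
  let ?S = "(\<Sum>d | d dvd n. int k ^ d * moebius (n div d))"
  have "n div 2 + 1 \<le> n'" using n4 nn by simp
  then have a: "int k ^ (n div 2 + 1) \<le> int k ^ n'"
    using assms by (intro power_increasing) auto
  have b: "int k ^ n = int k * int k ^ n'" using nn by simp
  have c: "2 * int k ^ n' \<le> int k * int k ^ n'"
    by (rule mult_right_mono) (use assms in auto)
  have d: "(2::int) ^ n' \<le> int k ^ n'" by (rule power_mono) (use assms in auto)
  have S1: "2 ^ n' \<le> ?S"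
    using sum_lower[OF assms(1) n4(2)] a b c d by linarith
  have "2 * ((j + 1) * n) = (2 * j + 2) * n" by simp
  also have "\<dots> \<le> n * n" using assms by (intro mult_right_mono) auto
  also have "\<dots> \<le> 2 ^ n" using sq_le_pow n4 by blast
  also have "\<dots> = 2 * 2 ^ n'" using nn by simp
  finally have "(j + 1) * n \<le> (2::nat) ^ n'" by simp
  then have "int ((j + 1) * n) \<le> int (2 ^ n')" by (simp only: of_nat_le_iff)
  then have "int ((j + 1) * n) \<le> 2 ^ n'" by simp
  then have "int (j + 1) * int n \<le> 2 ^ n'" by (simp add: algebra_simps)
  with S1 have "int (j + 1) * int n \<le> ?S" by linarith
  then have "int (j + 1) * int n div int n \<le> ?S div int n"
    using n4 by (intro zdiv_mono1) auto
  then have "int (j + 1) \<le> ?S div int n" using n4 by simp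
  then show ?thesis unfolding rk_def by linarith
qed

lemma bound1:
  fixes x F :: real
  assumes "0 \<le> x" "x \<le> 1/2" "F \<ge> 1"
  shows "\<bar>(\<Sum>i\<le>m. (-x)^i / fact i) / F - exp (-x) / F\<bar> \<le> 2^m / fact m"
proof -
  have "\<bar>(\<Sum>i\<le>m. (-x)^i / fact i) / F - exp (-x) / F\<bar> = \<bar>exp (-x) - (\<Sum>i\<le>m. (-x)^i / fact i)\<bar> / F"
    using assms by (simp add: abs_minus_commute flip: diff_divide_distrib)
  also have "\<dots> \<le> \<bar>exp (-x) - (\<Sum>i\<le>m. (-x)^i / fact i)\<bar>"
    using assms by (simp add: divide_le_eq mult_le_cancel_left1 mult_left_le)
  also have "\<dots> \<le> 2 * x^(m+1) / fact (m+1)" by (rule exp_tail) (use assms in auto)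
  also have "\<dots> \<le> 1 / fact (m+1)"
  proof (rule divide_right_mono)
    have "x^(m+1) \<le> x^1" using assms by (intro power_decreasing) auto
    then show "2 * x^(m+1) \<le> 1" using assms by simp
  qed simp
  also have "\<dots> \<le> 1 / fact m"
    by (rule divide_left_mono) (auto intro: fact_mono)
  also have "\<dots> \<le> 2^m / fact m"
    by (rule divide_right_mono) auto
  finally show ?thesis .
qed

lemma bound2:
  fixes x F :: real
  assumes "0 \<le> x" "x \<le> 1/2" "F > 0" "m \<ge> 1"
  shows "\<bar>(\<Sum>i\<le>m. (-x)^i / fact i) / F - (1 - x) / F\<bar> \<le> 4 * x^2 / F"
proof -
  have e1: "\<bar>exp (-x) - (\<Sum>i\<le>m. (-x)^i / fact i)\<bar> \<le> 2 * x^(m+1) / fact (m+1)"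
    by (rule exp_tail) (use assms in auto)
  have e2: "\<bar>exp (-x) - (\<Sum>i\<le>1. (-x)^i / fact i)\<bar> \<le> 2 * x^(1+1) / fact (1+1)"
    by (rule exp_tail) (use assms in auto)
  have s1: "(\<Sum>i\<le>1. (-x)^i / fact i) = 1 - x" by simp
  have "2 * x^(m+1) / fact (m+1) \<le> 2 * x^(m+1) / 1"
    by (rule divide_left_mono[OF fact_ge_1]) (use assms in auto)
  also have "\<dots> \<le> 2 * x^2"
  proof -
    have "x^(m+1) \<le> x^2" using assms by (intro power_decreasing) auto
    then show ?thesis by simp
  qed
  finally have a: "2 * x^(m+1) / fact (m+1) \<le> 2 * x^2" .
  have b: "2 * x^(1+1) / fact (1+1) = x^2" by (simp add: power2_eq_square)
  have "\<bar>(\<Sum>i\<le>m. (-x)^i / fact i) - (1 - x)\<bar> \<le> 2 * x^2 + x^2"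
    using e1 e2 s1 a b by linarith
  also have "\<dots> \<le> 2 * x^2 * 2" by simp
  finally have c: "\<bar>(\<Sum>i\<le>m. (-x)^i / fact i) - (1 - x)\<bar> \<le> 2 * x^2 * 2" .
  have "\<bar>(\<Sum>i\<le>m. (-x)^i / fact i) / F - (1 - x) / F\<bar> = \<bar>(\<Sum>i\<le>m. (-x)^i / fact i) - (1 - x)\<bar> / F"
    using assms by (simp flip: diff_divide_distrib)
  also have "\<dots> \<le> 2 * x^2 * 2 / F"
    by (rule divide_right_mono[OF c]) (use assms in simp)
  finally show ?thesis by simp
qed

theorem mainTheorem5:
  fixes k j :: nat
  assumes "k \<ge> 2"
  shows "((\<lambda>n. komega k n j - exp (- 1 / real n) / (fact j * real n ^ j))
           \<in> O(\<lambda>n. 2 ^ (rk k n - j) / fact (rk k n - j)))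
         \<and> ((\<lambda>n. komega k n j - (1 - 1 / real n) / (fact j * real n ^ j))
           \<in> O(\<lambda>n. 1 / real n ^ (j + 2)))"
proof -
  have om: "komega k n j = (if j \<le> rk k n then (\<Sum>i\<le>rk k n - j. (- (1 / real n))^i / fact i) / (fact j * real n ^ j) else 0)"
    if "n \<ge> 1" for n
    using omega_formula[of n "rk k n" j] that by (simp add: komega_def)
  have F: "fact j * real n ^ j \<ge> real n ^ j" "real n ^ j \<ge> 1" if "n \<ge> 1" for n
  proof -
    have f1: "1 \<le> (fact j :: real)" by simp
    show p1: "real n ^ j \<ge> 1" using that by simp
    show "fact j * real n ^ j \<ge> real n ^ j" using mult_right_mono[OF f1, of "real n ^ j"] p1 by simp
  qed
  have part1: "(\<lambda>n. komega k n j - exp (- 1 / real n) / (fact j * real n ^ j))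
           \<in> O(\<lambda>n. 2 ^ (rk k n - j) / fact (rk k n - j))"
  proof (rule bigoI[where c=1])
    show "eventually (\<lambda>n. norm (komega k n j - exp (- 1 / real n) / (fact j * real n ^ j))
            \<le> 1 * norm ((2::real) ^ (rk k n - j) / fact (rk k n - j))) at_top"
      unfolding eventually_at_top_linorder
    proof (intro exI allI impI)
      fix n :: nat assume n: "n \<ge> 2"
      define x where "x = 1 / real n"
      have x: "0 \<le> x" "x \<le> 1/2" using n by (auto simp: x_def field_simps)
      have FF: "fact j * real n ^ j \<ge> 1" using F[of n] n by linarith
      have ex: "exp (- 1 / real n) = exp (-x)" by (simp add: x_def)
      show "norm (komega k n j - exp (- 1 / real n) / (fact j * real n ^ j))
            \<le> 1 * norm ((2::real) ^ (rk k n - j) / fact (rk k n - j))"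
      proof (cases "j \<le> rk k n")
        case True
        then have "komega k n j = (\<Sum>i\<le>rk k n - j. (-x)^i / fact i) / (fact j * real n ^ j)"
          using om[of n] n by (simp add: x_def)
        then show ?thesis unfolding ex using bound1[OF x FF, of "rk k n - j"] by simp
      next
        case False
        then have k0: "komega k n j = 0" using om[of n] n by simp
        have "exp (-x) / (fact j * real n ^ j) \<le> exp (-x)"
          using FF by (simp add: divide_le_eq mult_le_cancel_left1 mult_left_le)
        also have "exp (-x) \<le> 1" using x by simp
        finally show ?thesis unfolding ex k0 using False by simp
      qed
    qed
  qed
  have part2: "(\<lambda>n. komega k n j - (1 - 1 / real n) / (fact j * real n ^ j))
           \<in> O(\<lambda>n. 1 / real n ^ (j + 2))"
  proof (rule bigoI[where c=4])
    show "eventually (\<lambda>n. norm (komega k n j - (1 - 1 / real n) / (fact j * real n ^ j))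
            \<le> 4 * norm (1 / real n ^ (j + 2))) at_top"
      unfolding eventually_at_top_linorder
    proof (intro exI allI impI)
      fix n :: nat assume n: "n \<ge> 2 * j + 6"
      define x where "x = 1 / real n"
      have x: "0 \<le> x" "x \<le> 1/2" using n by (auto simp: x_def field_simps)
      have Fp: "fact j * real n ^ j > 0" using n by simp
      have r: "j + 1 \<le> rk k n" using rk_large[OF assms n] .
      then have "komega k n j = (\<Sum>i\<le>rk k n - j. (-x)^i / fact i) / (fact j * real n ^ j)"
        using om[of n] n by (simp add: x_def)
      then have "norm (komega k n j - (1 - 1 / real n) / (fact j * real n ^ j)) \<le> 4 * x^2 / (fact j * real n ^ j)"
        using bound2[OF x Fp, of "rk k n - j"] r by (simp add: x_def)
      also have "\<dots> \<le> 4 * x^2 / real n ^ j"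
        by (rule divide_left_mono) (use F[of n] n in auto)
      also have "\<dots> = 4 * norm (1 / real n ^ (j + 2))"
        by (simp add: x_def power_add power2_eq_square field_simps)
      finally show "norm (komega k n j - (1 - 1 / real n) / (fact j * real n ^ j)) \<le> 4 * norm (1 / real n ^ (j + 2))" .
    qed
  qed
  show ?thesis using part1 part2 by blast
qed

end
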